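(* Let $(X_t)_{t\in\mathbb{N}}$ be real-valued random variables on $\Omega$ with $X_t$ $\mathcal{F}_t$-measurable for each $t$. Let $\mathcal{P}$ be a family of probability measures on $\mathcal{F}$ such that under each $\mathbb{P}\in\mathcal{P}$ the sequence $(X_t)_{t\in\mathbb{N}}$ is i.i.d. with $\mathbb{E}_{\mathbb{P}}[|X_1|]<\infty$, and assume the centered uniform integrability condition $$\lim_{K\to\infty}\sup_{\mathbb{P}\in\mathcal{P}}\mathbb{E}_{\mathbb{P}}\Big[|X_1-\mathbb{E}_{\mathbb{P}}[X_1]|\,\mathbf{1}_{\{|X_1-\mathbb{E}_{\mathbb{P}}[X_1]|>K\}}\Big]=0.$$ Let $A_{\mathrm{div}}=\big\{\lim_{t\to\infty}\frac1t\sum_{i=1}^tX_i \text{ does not exist in }\mathbb{R}\big\}$. Then $\mu^*(A_{\mathrm{div}})=0$.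
   Context: Standing setup: $(\Omega, (\mathcal{F}_t)_{t\in\mathbb{N}_0}, \mathcal{F})$ is a filtered measurable space with $\mathcal{F} = \sigma\big(\bigcup_{t} \mathcal{F}_t\big)$. A stopping time is a map $\tau:\Omega\to\mathbb{N}_0\cup\{\infty\}$ with $\{\tau \le t\}\in\mathcal{F}_t$ for all $t$; $\mathcal{T}$ denotes the set of all stopping times. The inverse-capital measure of $A\subseteq\Omega$ with respect to the family $\mathcal{P}$ is $\mu^*(A) = \inf_{\tau\in\mathcal{T}:\, A\subseteq\{\tau<\infty\}} \sup_{\mathbb{P}\in\mathcal{P}} \mathbb{P}(\tau<\infty)$. *)

theory Defs
  imports "HOL-Probability.Probability"
begin

definition filtered_space :: "'a set \<Rightarrow> (nat \<Rightarrow> 'a set set) \<Rightarrow> 'a set set \<Rightarrow> bool" where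
  "filtered_space \<Omega> F \<F> \<longleftrightarrow>
     (\<forall>t. sigma_algebra \<Omega> (F t)) \<and> (\<forall>t. F t \<subseteq> F (Suc t)) \<and>
     \<F> = sigma_sets \<Omega> (\<Union>t. F t)"

definition stopping_time_nat :: "'a set \<Rightarrow> (nat \<Rightarrow> 'a set set) \<Rightarrow> ('a \<Rightarrow> enat) \<Rightarrow> bool" where
  "stopping_time_nat \<Omega> F \<tau> \<longleftrightarrow> (\<forall>t::nat. {\<omega>\<in>\<Omega>. \<tau> \<omega> \<le> enat t} \<in> F t)"

definition inv_capital :: "'a set \<Rightarrow> (nat \<Rightarrow> 'a set set) \<Rightarrow> 'a measure set \<Rightarrow> 'a set \<Rightarrow> ennreal" where
  "inv_capital \<Omega> F \<P> A =
     (INF \<tau> \<in> {\<tau>. stopping_time_nat \<Omega> F \<tau> \<and> A \<subseteq> {\<omega>\<in>\<Omega>. \<tau> \<omega> < \<infinity>}}.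
        SUP P \<in> \<P>. emeasure P {\<omega>\<in>\<Omega>. \<tau> \<omega> < \<infinity>})"

end

theory Submission
  imports Defs
begin



lemma meas_h:
  fixes n :: nat and \<delta> :: real and D :: "real measure"
  assumes sD: "sets D = sets borel"
  shows "(\<lambda>y. Max ((\<lambda>k. \<Sum>i<k. (y i - \<delta>)) ` {..n})) \<in> borel_measurable (Pi\<^sub>M {..<n} (\<lambda>_. D))"
proof -
  have m: "(\<lambda>y. Max ((\<lambda>k. \<Sum>i<k. (y i - \<delta>)) ` {..n})) \<in> borel_measurable (Pi\<^sub>M {..<n} (\<lambda>_. borel))"
    apply (rule borel_measurable_Max, simp)
    apply (rule borel_measurable_sum)
    apply (rule borel_measurable_diff)
     apply (rule measurable_component_singleton)
    by auto
  have S: "sets (Pi\<^sub>M {..<n} (\<lambda>_. D)) = sets (Pi\<^sub>M {..<n} (\<lambda>_. borel))"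
    by (rule sets_PiM_cong) (auto simp: sD)
  show ?thesis
    unfolding measurable_cong_sets[OF S refl] by (rule m)
qed

lemma meas_pi:
  fixes c n :: nat and K :: "nat set" and D :: "real measure"
  assumes "\<And>i. i < n \<Longrightarrow> i + c \<in> K"
  shows "(\<lambda>\<omega>. \<lambda>i\<in>{..<n}. \<omega> (i + c)) \<in> Pi\<^sub>M K (\<lambda>_. D) \<rightarrow>\<^sub>M Pi\<^sub>M {..<n} (\<lambda>_. D)"
  apply (rule measurable_restrict)
  apply (rule measurable_component_singleton)
  using assms by auto


lemma (in prob_space) maximal_fin:
  fixes W :: "nat \<Rightarrow> 'a \<Rightarrow> real" and \<delta> :: real and n :: nat
  assumes indep: "indep_vars (\<lambda>_. borel) W {1..}"
    and ident: "\<And>i. 1 \<le> i \<Longrightarrow> distr M borel (W i) = distr M borel (W 1)"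
    and int: "integrable M (W 1)"
    and nn: "\<And>i x. x \<in> space M \<Longrightarrow> 0 \<le> W i x"
    and \<delta>: "0 < \<delta>"
  shows "\<delta> * prob {x\<in>space M. \<exists>k\<in>{1..n}. real k * \<delta> < (\<Sum>i=1..k. W i x)} \<le> expectation (W 1)"
proof -
  have rv: "\<And>i. 1 \<le> i \<Longrightarrow> W i \<in> borel_measurable M"
    using indep unfolding indep_vars_def by auto
  have intW: "integrable M (W i)" if "1 \<le> i" for i
  proof -
    have "integrable (distr M borel (W 1)) (\<lambda>x. x)"
      using int rv[of 1] by (subst integrable_distr_eq) auto
    then have "integrable (distr M borel (W i)) (\<lambda>x. x)" using ident[OF that] by simp
    then show ?thesis using rv[OF that] by (subst (asm) integrable_distr_eq) auto
  qed
  define h :: "(nat \<Rightarrow> real) \<Rightarrow> real" where "h y = Max ((\<lambda>k. \<Sum>i<k. (y i - \<delta>)) ` {..n})" for y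
  define Mc where "Mc c x = h (\<lambda>i. W (i+c) x)" for c x
  have h_ge: "(\<Sum>i<k. (y i - \<delta>)) \<le> h y" if "k \<le> n" for k y
    unfolding h_def using that by (intro Max_ge) auto
  have Mc_nn: "0 \<le> Mc c x" for c x
    using h_ge[of 0 "\<lambda>i. W (i+c) x"] unfolding Mc_def by simp
  have Mc_le: "Mc c x \<le> (\<Sum>i<n. \<bar>W (i+c) x - \<delta>\<bar>)" for c x
    unfolding Mc_def h_def
  proof (subst Max_le_iff, simp, simp, clarify)
    fix k assume "k \<le> n"
    have "(\<Sum>i<k. W (i+c) x - \<delta>) \<le> (\<Sum>i<k. \<bar>W (i+c) x - \<delta>\<bar>)"
      by (intro sum_mono) auto
    also have "\<dots> \<le> (\<Sum>i<n. \<bar>W (i+c) x - \<delta>\<bar>)"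
      using \<open>k \<le> n\<close> by (intro sum_mono2) auto
    finally show "(\<Sum>i<k. W (i+c) x - \<delta>) \<le> (\<Sum>i<n. \<bar>W (i+c) x - \<delta>\<bar>)" .
  qed
  have Mc_meas: "Mc c \<in> borel_measurable M" if "1 \<le> c" for c
    unfolding Mc_def h_def
    apply (rule borel_measurable_Max, simp)
    apply (rule borel_measurable_sum)
    apply (rule borel_measurable_diff)
    using rv that by auto
  have Mc_int: "integrable M (Mc c)" if "1 \<le> c" for c
  proof (rule Bochner_Integration.integrable_bound[OF _ Mc_meas[OF that]])
    show "integrable M (\<lambda>x. \<Sum>i<n. \<bar>W (i+c) x - \<delta>\<bar>)"
      using that by (intro Bochner_Integration.integrable_sum Bochner_Integration.integrable_abs Bochner_Integration.integrable_diff intW) auto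
    show "AE x in M. norm (Mc c x) \<le> norm (\<Sum>i<n. \<bar>W (i+c) x - \<delta>\<bar>)"
      using Mc_nn Mc_le by (auto intro!: AE_I2 order_trans[OF _ abs_ge_self])
  qed
  have key: "Mc 1 x \<le> (W 1 x - \<delta>) + Mc 2 x" if "0 < Mc 1 x" for x
  proof -
    have fin: "finite ((\<lambda>k. \<Sum>i<k. (W (i+1) x - \<delta>)) ` {..n})" by simp
    have ne: "(\<lambda>k. \<Sum>i<k. (W (i+1) x - \<delta>)) ` {..n} \<noteq> {}" by simp
    have "Mc 1 x \<in> (\<lambda>k. \<Sum>i<k. (W (i+1) x - \<delta>)) ` {..n}"
      unfolding Mc_def h_def using Max_in[OF fin ne] by (simp only:)
    then obtain k where k: "k \<le> n" "Mc 1 x = (\<Sum>i<k. (W (i+1) x - \<delta>))"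
      by blast
    have "k \<noteq> 0" using that k by (cases k) auto
    then obtain j where j: "k = Suc j" by (cases k) auto
    have "Mc 1 x = (W 1 x - \<delta>) + (\<Sum>i<j. (W (Suc i + 1) x - \<delta>))"
      using k(2) unfolding j sum.lessThan_Suc_shift by simp
    also have "(\<Sum>i<j. (W (Suc i + 1) x - \<delta>)) = (\<Sum>i<j. (W (i+2) x - \<delta>))"
      by (simp add: numeral_2_eq_2)
    also have "(\<Sum>i<j. (W (i+2) x - \<delta>)) \<le> Mc 2 x"
      unfolding Mc_def using k(1) j by (intro h_ge) auto
    finally show ?thesis by simp
  qed
  define S where "S = {x\<in>space M. \<exists>k\<in>{1..n}. real k * \<delta> < (\<Sum>i=1..k. W i x)}"
  have S_eq: "S = {x\<in>space M. 0 < Mc 1 x}"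
  proof -
    have "(\<exists>k\<in>{1..n}. real k * \<delta> < (\<Sum>i=1..k. W i x)) \<longleftrightarrow> 0 < Mc 1 x" for x
    proof -
      have eq: "(\<Sum>i=1..k. W i x) - real k * \<delta> = (\<Sum>i<k. (W (i+1) x - \<delta>))" for k
        by (simp add: sum_subtractf sum.atLeast1_atMost_eq)
      have "0 < Mc 1 x \<longleftrightarrow> (\<exists>k\<in>{..n}. 0 < (\<Sum>i<k. (W (i+1) x - \<delta>)))"
        unfolding Mc_def h_def by (subst Max_gr_iff) auto
      also have "\<dots> \<longleftrightarrow> (\<exists>k\<in>{1..n}. 0 < (\<Sum>i<k. (W (i+1) x - \<delta>)))"
      proof
        assume "\<exists>k\<in>{..n}. 0 < (\<Sum>i<k. (W (i+1) x - \<delta>))"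
        then obtain k where k: "k \<le> n" "0 < (\<Sum>i<k. (W (i+1) x - \<delta>))" by auto
        then have "k \<noteq> 0" by (cases k) auto
        with k show "\<exists>k\<in>{1..n}. 0 < (\<Sum>i<k. (W (i+1) x - \<delta>))"
          by (intro bexI[of _ k]) auto
      qed auto
      also have "\<dots> \<longleftrightarrow> (\<exists>k\<in>{1..n}. real k * \<delta> < (\<Sum>i=1..k. W i x))"
        unfolding eq[symmetric] by simp
      finally show ?thesis by simp
    qed
    then show ?thesis unfolding S_def by auto
  qed
  have S_sets: "S \<in> events"
    unfolding S_eq using Mc_meas[of 1] by measurable
  have pw: "Mc 1 x - Mc 2 x \<le> W 1 x - \<delta> * indicator S x" if "x \<in> space M" for x
  proof (cases "0 < Mc 1 x")
    case True
    then show ?thesis using key[OF True] that by (simp add: S_eq)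
  next
    case False
    then have "Mc 1 x = 0" using Mc_nn[of 1 x] by simp
    then show ?thesis using Mc_nn[of 2 x] nn[OF that, of 1] that by (simp add: S_eq indicator_def)
  qed
  have EqE: "expectation (Mc 1) = expectation (Mc 2)"
  proof -
    define Kset where "Kset = {1..<n+2}"
    define D where "D = distr M borel (W 1)"
    define \<Phi> where "\<Phi> x = (\<lambda>i\<in>Kset. W i x)" for x
    have sD: "sets D = sets borel" by (simp add: D_def)
    have sK: "sets (Pi\<^sub>M Kset (\<lambda>_. D)) = sets (Pi\<^sub>M Kset (\<lambda>_. borel))"
      by (rule sets_PiM_cong) (auto simp: sD)
    have probD: "prob_space D" unfolding D_def using rv[of 1] by (auto intro!: prob_space_distr)
    have Phi_meas: "\<Phi> \<in> M \<rightarrow>\<^sub>M Pi\<^sub>M Kset (\<lambda>_. borel)"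
      unfolding \<Phi>_def by (rule measurable_restrict) (use rv in \<open>auto simp: Kset_def\<close>)
    have Phi_meas': "\<Phi> \<in> M \<rightarrow>\<^sub>M Pi\<^sub>M Kset (\<lambda>_. D)"
      using Phi_meas by (simp add: measurable_cong_sets[OF refl sK])
    have G: "distr M (Pi\<^sub>M Kset (\<lambda>_. borel)) \<Phi> = Pi\<^sub>M Kset (\<lambda>_. D)"
    proof -
      have "indep_vars (\<lambda>_. borel) W Kset"
        by (rule indep_vars_subset[OF indep]) (auto simp: Kset_def)
      then have "distr M (Pi\<^sub>M Kset (\<lambda>_. borel)) \<Phi> = Pi\<^sub>M Kset (\<lambda>i. distr M borel (W i))"
        unfolding \<Phi>_def using rv by (subst (asm) indep_vars_iff_distr_eq_PiM') (auto simp: Kset_def)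
      also have "\<dots> = Pi\<^sub>M Kset (\<lambda>_. D)"
        unfolding D_def Kset_def by (intro PiM_cong refl ident) auto
      finally show ?thesis .
    qed
    have G': "distr M (Pi\<^sub>M Kset (\<lambda>_. D)) \<Phi> = Pi\<^sub>M Kset (\<lambda>_. D)"
    proof -
      have "distr M (Pi\<^sub>M Kset (\<lambda>_. D)) \<Phi> = distr M (Pi\<^sub>M Kset (\<lambda>_. borel)) \<Phi>"
        by (rule distr_cong) (auto simp: sK)
      then show ?thesis using G by simp
    qed
    define \<pi> where "\<pi> c \<omega> = (\<lambda>i\<in>{..<n}. \<omega> (i + c))" for c :: nat and \<omega> :: "nat \<Rightarrow> real"
    have hm: "h \<in> borel_measurable (Pi\<^sub>M {..<n} (\<lambda>_. D))"
      unfolding h_def[abs_def] by (rule meas_h[OF sD])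
    have E: "expectation (Mc c) = integral\<^sup>L (Pi\<^sub>M {..<n} (\<lambda>_. D)) h" if c: "c = 1 \<or> c = 2" for c
    proof -
      have inK: "i + c \<in> Kset" if "i < n" for i using c that by (auto simp: Kset_def)
      have hpi: "h (\<pi> c (\<Phi> x)) = Mc c x" for x
        unfolding Mc_def h_def \<pi>_def \<Phi>_def using inK
        by (intro arg_cong[where f=Max] image_cong refl sum.cong) auto
      have pim: "\<pi> c \<in> Pi\<^sub>M Kset (\<lambda>_. D) \<rightarrow>\<^sub>M Pi\<^sub>M {..<n} (\<lambda>_. D)"
        unfolding \<pi>_def[abs_def] by (rule meas_pi) (rule inK)
      have fm: "(\<lambda>\<omega>. h (\<pi> c \<omega>)) \<in> borel_measurable (Pi\<^sub>M Kset (\<lambda>_. D))"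
        using measurable_comp[OF pim hm] by (simp add: comp_def)
      have "expectation (Mc c) = integral\<^sup>L M (\<lambda>x. h (\<pi> c (\<Phi> x)))"
        by (simp add: hpi)
      also have "\<dots> = integral\<^sup>L (distr M (Pi\<^sub>M Kset (\<lambda>_. D)) \<Phi>) (\<lambda>\<omega>. h (\<pi> c \<omega>))"
        by (rule sym[OF integral_distr[OF Phi_meas' fm]])
      also have "\<dots> = integral\<^sup>L (Pi\<^sub>M Kset (\<lambda>_. D)) (\<lambda>\<omega>. h (\<pi> c \<omega>))"
        by (simp only: G')
      also have "\<dots> = integral\<^sup>L (distr (Pi\<^sub>M Kset (\<lambda>_. D)) (Pi\<^sub>M {..<n} (\<lambda>_. D)) (\<pi> c)) h"
        by (rule sym[OF integral_distr[OF pim hm]])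
      also have "distr (Pi\<^sub>M Kset (\<lambda>_. D)) (Pi\<^sub>M {..<n} (\<lambda>_. D)) (\<pi> c) = Pi\<^sub>M {..<n} (\<lambda>_. D)"
      proof -
        have \<pi>eq: "\<pi> c = (\<lambda>\<omega>. \<lambda>i\<in>{..<n}. \<omega> (i + c))" by (rule ext) (simp add: \<pi>_def)
        have "distr (Pi\<^sub>M Kset (\<lambda>_. D)) (Pi\<^sub>M {..<n} (\<lambda>_. D)) (\<lambda>\<omega>. \<lambda>i\<in>{..<n}. \<omega> (i + c)) = Pi\<^sub>M {..<n} (\<lambda>_. D)"
        proof (rule distr_PiM_reindex[of Kset "\<lambda>_. D" "\<lambda>i. i + c" "{..<n}"])
          show "prob_space D" if "i \<in> Kset" for i by (rule probD)
          show "inj_on (\<lambda>i. i + c) {..<n}" by (simp add: inj_on_def)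
          show "(\<lambda>i. i + c) \<in> {..<n} \<rightarrow> Kset" using inK by auto
        qed
        then show ?thesis by (simp only: \<pi>eq)
      qed
      finally show ?thesis .
    qed
    show ?thesis using E[of 1] E[of 2] by simp
  qed
  have intI: "integrable M (\<lambda>x. \<delta> * indicator S x :: real)"
    using S_sets by (intro integrable_mult_right integrable_real_indicator) (auto simp: less_top[symmetric])
  have intS: "integrable M (\<lambda>x. W 1 x - \<delta> * indicator S x)"
    by (rule Bochner_Integration.integrable_diff[OF int intI])
  have intM: "integrable M (\<lambda>x. Mc 1 x - Mc 2 x)"
    by (rule Bochner_Integration.integrable_diff[OF Mc_int Mc_int]) auto
  have "expectation (\<lambda>x. Mc 1 x - Mc 2 x) \<le> expectation (\<lambda>x. W 1 x - \<delta> * indicator S x)"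
    using pw by (intro integral_mono[OF intM intS]) auto
  also have "expectation (\<lambda>x. W 1 x - \<delta> * indicator S x) = expectation (W 1) - \<delta> * prob S"
    using S_sets by (subst Bochner_Integration.integral_diff[OF int intI]) simp
  finally have calc: "expectation (\<lambda>x. Mc 1 x - Mc 2 x) \<le> expectation (W 1) - \<delta> * prob S" .
  have Z: "expectation (\<lambda>x. Mc 1 x - Mc 2 x) = 0"
    by (subst Bochner_Integration.integral_diff) (use Mc_int EqE in auto)
  have "\<delta> * prob S \<le> expectation (W 1)" using calc Z by linarith
  then show ?thesis unfolding S_def .
qed


lemma (in prob_space) maximal:
  fixes W :: "nat \<Rightarrow> 'a \<Rightarrow> real" and \<delta> :: real
  assumes indep: "indep_vars (\<lambda>_. borel) W {1..}"
    and ident: "\<And>i. 1 \<le> i \<Longrightarrow> distr M borel (W i) = distr M borel (W 1)"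
    and int: "integrable M (W 1)"
    and nn: "\<And>i x. x \<in> space M \<Longrightarrow> 0 \<le> W i x"
    and \<delta>: "0 < \<delta>"
  shows "\<delta> * prob {x\<in>space M. \<exists>k\<ge>1. real k * \<delta> < (\<Sum>i=1..k. W i x)} \<le> expectation (W 1)"
proof -
  have rv: "\<And>i. 1 \<le> i \<Longrightarrow> W i \<in> borel_measurable M"
    using indep unfolding indep_vars_def by auto
  define A where "A n = {x\<in>space M. \<exists>k\<in>{1..n}. real k * \<delta> < (\<Sum>i=1..k. W i x)}" for n
  have Ak: "{x\<in>space M. real k * \<delta> < (\<Sum>i=1..k. W i x)} \<in> events" for k
  proof -
    have [measurable]: "(\<lambda>x. \<Sum>i=1..k. W i x) \<in> borel_measurable M"
      using rv by (intro borel_measurable_sum) auto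
    show ?thesis by measurable
  qed
  have A_eq: "A n = (\<Union>k\<in>{1..n}. {x\<in>space M. real k * \<delta> < (\<Sum>i=1..k. W i x)})" for n
    unfolding A_def by auto
  have A_sets: "range A \<subseteq> events"
    unfolding A_eq using Ak by auto
  have A_inc: "incseq A"
    unfolding incseq_def A_def by fastforce
  have U: "(\<Union>n. A n) = {x\<in>space M. \<exists>k\<ge>1. real k * \<delta> < (\<Sum>i=1..k. W i x)}"
    unfolding A_def by fastforce
  have lim: "(\<lambda>n. \<delta> * prob (A n)) \<longlonglongrightarrow> \<delta> * prob (\<Union>n. A n)"
    by (intro tendsto_mult_left finite_Lim_measure_incseq A_sets A_inc)
  have "\<delta> * prob (\<Union>n. A n) \<le> expectation (W 1)"
    by (rule LIMSEQ_le_const2[OF lim]) (use maximal_fin[OF assms] in \<open>auto simp: A_def\<close>)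
  then show ?thesis unfolding U .
qed

definition clip :: "real \<Rightarrow> real \<Rightarrow> real" where "clip K y = max (-K) (min K y)"

lemma clip_meas[measurable]: "clip K \<in> borel_measurable borel"
  unfolding clip_def[abs_def] by measurable

lemma (in prob_space) ident_compose:
  assumes "X i \<in> borel_measurable M" "X j \<in> borel_measurable M"
    "distr M borel (X i) = distr M borel (X j)" "g \<in> borel_measurable borel"
  shows "distr M borel (\<lambda>x. g (X i x)) = distr M borel (\<lambda>x. g (X j x))"
proof -
  have "distr M borel (\<lambda>x. g (X i x)) = distr (distr M borel (X i)) borel g"
    using assms by (subst distr_distr) (auto simp: comp_def)
  also have "\<dots> = distr (distr M borel (X j)) borel g" using assms by simp
  also have "\<dots> = distr M borel (\<lambda>x. g (X j x))"
    using assms by (subst distr_distr) (auto simp: comp_def)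
  finally show ?thesis .
qed

lemma (in prob_space) hoeff_step:
  fixes X :: "nat \<Rightarrow> 'a \<Rightarrow> real"
  assumes indep: "indep_vars (\<lambda>_. borel) X {1..}"
    and ident: "\<And>i. 1 \<le> i \<Longrightarrow> distr M borel (X i) = distr M borel (X 1)"
    and K: "0 < K" and n: "1 \<le> n" and \<epsilon>: "0 \<le> \<epsilon>"
  shows "prob {x\<in>space M. \<epsilon> \<le> \<bar>(\<Sum>i=1..n. clip K (X i x - m))/n - expectation (\<lambda>x. clip K (X 1 x - m))\<bar>}
           \<le> 2 * exp (- 2 * real n * \<epsilon>\<^sup>2 / (K - - K)\<^sup>2)"
proof -
  have rv: "\<And>i. 1 \<le> i \<Longrightarrow> X i \<in> borel_measurable M"
    using indep unfolding indep_vars_def by auto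
  have rv1[measurable]: "X 1 \<in> borel_measurable M" using rv by simp
  define g where "g y = clip K (y - m)" for y
  have gm[measurable]: "g \<in> borel_measurable borel" unfolding g_def[abs_def] by measurable
  define B where "B = (\<lambda>i x. g (X i x))"
  interpret H: Hoeffding_ineq_iid M "{1..n}" B "B 1" "-K" K "expectation (B 1)"
  proof unfold_locales
    show "finite {1..n}" by simp
    show "indep_vars (\<lambda>_. borel) B {1..n}"
      unfolding B_def
      by (rule indep_vars_compose2[OF indep_vars_subset[OF indep], where Y="\<lambda>_. g" and N="\<lambda>_. borel"]) (auto intro: gm)
    show "distr M borel (B i) = distr M borel (B 1)" if "i \<in> {1..n}" for i
      unfolding B_def using that by (intro ident_compose[of X i 1 g] rv rv1 ident gm) auto
    show "random_variable borel (B 1)" unfolding B_def by measurable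
    show "AE x in M. B 1 x \<in> {- K..K}"
      using K by (auto simp: B_def g_def clip_def)
  qed simp
  have "{1..n} \<noteq> {}" using n by auto
  from H.Hoeffding_ineq_abs_ge'[OF \<epsilon> _ this] K
  show ?thesis by (simp add: B_def g_def)
qed


lemma (in prob_space) perP:
  fixes X :: "nat \<Rightarrow> 'a \<Rightarrow> real" and K e \<gamma> :: real and N :: nat
  assumes indep: "indep_vars (\<lambda>_. borel) X {1..}"
    and ident: "\<And>i. 1 \<le> i \<Longrightarrow> distr M borel (X i) = distr M borel (X 1)"
    and int: "integrable M (X 1)"
    and K: "0 < K" and \<gamma>: "0 < \<gamma>" and e: "0 \<le> e" "e \<le> \<gamma>/4"
    and UIb: "(\<integral>\<^sup>+x. ennreal (\<bar>X 1 x - expectation (X 1)\<bar> * indicator {x. \<bar>X 1 x - expectation (X 1)\<bar> > K} x) \<partial>M) \<le> ennreal e"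
    and N: "1 \<le> N"
  shows "emeasure M {x\<in>space M. \<exists>n\<ge>N. \<gamma> < \<bar>(\<Sum>i=1..n. X i x)/n - expectation (X 1)\<bar>}
     \<le> ennreal (4*e/\<gamma>) + (\<Sum>m. ennreal (2 * exp (- 2 * real (m+N) * (\<gamma>/4)\<^sup>2 / (K - - K)\<^sup>2)))"
proof -
  define \<mu> where "\<mu> = expectation (X 1)"
  have rv: "X i \<in> borel_measurable M" if "1 \<le> i" for i
    using indep that unfolding indep_vars_def by auto
  have rv1[measurable]: "X 1 \<in> borel_measurable M" using rv by simp
  define g where "g y = max (\<bar>y - \<mu>\<bar> - K) 0" for y
  have gm[measurable]: "g \<in> borel_measurable borel" unfolding g_def[abs_def] by measurable
  define Wr where "Wr = (\<lambda>i x. g (X i x))"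
  have Wr_nn: "0 \<le> Wr i x" for i x by (simp add: Wr_def g_def)
  have YBW: "\<bar>(X i x - \<mu>) - clip K (X i x - \<mu>)\<bar> \<le> Wr i x" for i x
    using K by (auto simp: clip_def Wr_def g_def max_def min_def abs_if)
  have Wr_indep: "indep_vars (\<lambda>_. borel) Wr {1..}"
    unfolding Wr_def by (rule indep_vars_compose2[OF indep, where Y="\<lambda>_. g" and N="\<lambda>_. borel"]) (rule gm)
  have Wr_ident: "distr M borel (Wr i) = distr M borel (Wr 1)" if "1 \<le> i" for i
    unfolding Wr_def by (rule ident_compose[OF rv[OF that] rv[of 1] ident[OF that] gm]) simp
  have Y_int: "integrable M (\<lambda>x. X 1 x - \<mu>)"
    using int by (intro Bochner_Integration.integrable_diff) auto
  have Wr_int: "integrable M (Wr 1)"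
  proof (rule Bochner_Integration.integrable_bound[OF Bochner_Integration.integrable_abs[OF Y_int]])
    show "Wr 1 \<in> borel_measurable M" unfolding Wr_def by measurable
    show "AE x in M. norm (Wr 1 x) \<le> norm \<bar>X 1 x - \<mu>\<bar>"
      using K by (intro AE_I2) (auto simp: Wr_def g_def)
  qed
  have EWr: "expectation (Wr 1) \<le> e"
  proof -
    have "ennreal (expectation (Wr 1)) = (\<integral>\<^sup>+x. ennreal (Wr 1 x) \<partial>M)"
      by (rule nn_integral_eq_integral[symmetric, OF Wr_int]) (simp add: Wr_nn)
    also have "\<dots> \<le> (\<integral>\<^sup>+x. ennreal (\<bar>X 1 x - \<mu>\<bar> * indicator {x. \<bar>X 1 x - \<mu>\<bar> > K} x) \<partial>M)"
      using K by (intro nn_integral_mono ennreal_leI) (auto simp: Wr_def g_def indicator_def)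
    also have "\<dots> \<le> ennreal e" using UIb unfolding \<mu>_def .
    finally show ?thesis using e by (simp add: ennreal_le_iff)
  qed
  define mB where "mB = expectation (\<lambda>x. clip K (X 1 x - \<mu>))"
  have B_int: "integrable M (\<lambda>x. clip K (X 1 x - \<mu>))"
  proof (rule Bochner_Integration.integrable_bound[OF integrable_const[of K]])
    show "(\<lambda>x. clip K (X 1 x - \<mu>)) \<in> borel_measurable M" by measurable
    show "AE x in M. norm (clip K (X 1 x - \<mu>)) \<le> norm K"
      using K by (intro AE_I2) (auto simp: clip_def)
  qed
  have mB: "\<bar>mB\<bar> \<le> e"
  proof -
    have EY: "expectation (\<lambda>x. X 1 x - \<mu>) = 0"
      using int by (simp add: \<mu>_def prob_space)
    have D_int: "integrable M (\<lambda>x. (X 1 x - \<mu>) - clip K (X 1 x - \<mu>))"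
      by (rule Bochner_Integration.integrable_diff[OF Y_int B_int])
    have "expectation (\<lambda>x. (X 1 x - \<mu>) - clip K (X 1 x - \<mu>)) = - mB"
      unfolding mB_def Bochner_Integration.integral_diff[OF Y_int B_int] EY by simp
    then have "\<bar>mB\<bar> = \<bar>expectation (\<lambda>x. (X 1 x - \<mu>) - clip K (X 1 x - \<mu>))\<bar>" by simp
    also have "\<dots> \<le> expectation (\<lambda>x. \<bar>(X 1 x - \<mu>) - clip K (X 1 x - \<mu>)\<bar>)"
      by (rule integral_abs_bound)
    also have "\<dots> \<le> expectation (Wr 1)"
      using YBW by (intro integral_mono Bochner_Integration.integrable_abs D_int Wr_int) auto
    finally show ?thesis using EWr by simp
  qed
  define Hn where "Hn n = {x\<in>space M. \<gamma>/4 \<le> \<bar>(\<Sum>i=1..n. clip K (X i x - \<mu>))/n - mB\<bar>}" for n :: nat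
  define Mx where "Mx = {x\<in>space M. \<exists>k\<ge>1. real k * (\<gamma>/4) < (\<Sum>i=1..k. Wr i x)}"
  have sumB_m[measurable]: "(\<lambda>x. \<Sum>i=1..n. clip K (X i x - \<mu>)) \<in> borel_measurable M" for n
    using rv by (intro borel_measurable_sum measurable_compose[OF _ clip_meas] borel_measurable_diff) auto
  have sumW_m[measurable]: "(\<lambda>x. \<Sum>i=1..n. Wr i x) \<in> borel_measurable M" for n
    unfolding Wr_def using rv by (intro borel_measurable_sum measurable_compose[OF _ gm]) auto
  have Hn_sets: "Hn n \<in> events" for n unfolding Hn_def by measurable
  have Mx_sets: "Mx \<in> events"
  proof -
    have "Mx = (\<Union>k\<in>{1..}. {x\<in>space M. real k * (\<gamma>/4) < (\<Sum>i=1..k. Wr i x)})"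
      unfolding Mx_def by auto
    also have "\<dots> \<in> events" by measurable
    finally show ?thesis .
  qed
  have incl: "{x\<in>space M. \<exists>n\<ge>N. \<gamma> < \<bar>(\<Sum>i=1..n. X i x)/n - \<mu>\<bar>} \<subseteq> (\<Union>m. Hn (m+N)) \<union> Mx"
  proof clarify
    fix x n assume x: "x \<in> space M" and n: "N \<le> n" and gt: "\<gamma> < \<bar>(\<Sum>i=1..n. X i x)/n - \<mu>\<bar>"
      and nM: "x \<notin> Mx"
    have n1: "1 \<le> n" using n N by simp
    have h1: "(\<Sum>i=1..n. Wr i x) \<le> real n * (\<gamma>/4)" using nM x n1 unfolding Mx_def by (auto simp: not_less)
    have h2: "\<bar>\<Sum>i=1..n. (X i x - \<mu>) - clip K (X i x - \<mu>)\<bar> \<le> (\<Sum>i=1..n. Wr i x)"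
      by (rule order_trans[OF sum_abs sum_mono]) (rule YBW)
    have eq: "(\<Sum>i=1..n. X i x)/n - \<mu> = ((\<Sum>i=1..n. clip K (X i x - \<mu>))/n - mB) + mB
               + (\<Sum>i=1..n. (X i x - \<mu>) - clip K (X i x - \<mu>))/n"
      using n1 by (simp add: sum_subtractf sum.distrib field_simps)
    have h3: "\<bar>(\<Sum>i=1..n. (X i x - \<mu>) - clip K (X i x - \<mu>))/n\<bar> \<le> \<gamma>/4"
      using h1 h2 n1 by (simp add: divide_le_eq mult.commute)
    have "\<gamma>/4 \<le> \<bar>(\<Sum>i=1..n. clip K (X i x - \<mu>))/n - mB\<bar>"
    proof (rule ccontr)
      assume "\<not> ?thesis"
      then have "\<bar>(\<Sum>i=1..n. X i x)/n - \<mu>\<bar> < \<gamma>/4 + e + \<gamma>/4"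
        unfolding eq using h3 mB by linarith
      then show False using gt e by linarith
    qed
    then have "x \<in> Hn ((n - N) + N)" using n x by (simp add: Hn_def)
    then show "x \<in> (\<Union>m. Hn (m+N))" by blast
  qed
  have a1: "emeasure M {x\<in>space M. \<exists>n\<ge>N. \<gamma> < \<bar>(\<Sum>i=1..n. X i x)/n - \<mu>\<bar>} \<le> emeasure M ((\<Union>m. Hn (m+N)) \<union> Mx)"
    using Hn_sets Mx_sets by (intro emeasure_mono[OF incl]) auto
  have a2: "emeasure M ((\<Union>m. Hn (m+N)) \<union> Mx) \<le> emeasure M (\<Union>m. Hn (m+N)) + emeasure M Mx"
    using Hn_sets Mx_sets by (intro emeasure_subadditive) auto
  have b1: "emeasure M (\<Union>m. Hn (m+N)) \<le> (\<Sum>m. emeasure M (Hn (m+N)))"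
    using Hn_sets by (intro emeasure_subadditive_countably) auto
  have b2: "(\<Sum>m. emeasure M (Hn (m+N))) \<le> (\<Sum>m. ennreal (2 * exp (- 2 * real (m+N) * (\<gamma>/4)\<^sup>2 / (K - - K)\<^sup>2)))"
  proof (rule suminf_le[OF _ summableI summableI])
    fix m
    have "prob (Hn (m+N)) \<le> 2 * exp (- 2 * real (m+N) * (\<gamma>/4)\<^sup>2 / (K - - K)\<^sup>2)"
      unfolding Hn_def mB_def using N \<gamma> by (intro hoeff_step[OF indep ident K]) auto
    then show "emeasure M (Hn (m+N)) \<le> ennreal (2 * exp (- 2 * real (m+N) * (\<gamma>/4)\<^sup>2 / (K - - K)\<^sup>2))"
      by (simp add: emeasure_eq_measure ennreal_leI)
  qed
  have c: "emeasure M Mx \<le> ennreal (4*e/\<gamma>)"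
  proof -
    have "\<gamma>/4 * prob Mx \<le> expectation (Wr 1)"
      unfolding Mx_def using \<gamma> by (intro maximal[OF Wr_indep Wr_ident Wr_int]) (auto simp: Wr_nn)
    then have "prob Mx \<le> 4*e/\<gamma>" using EWr \<gamma> by (simp add: field_simps)
    then show ?thesis by (simp add: emeasure_eq_measure ennreal_leI)
  qed
  have "emeasure M {x\<in>space M. \<exists>n\<ge>N. \<gamma> < \<bar>(\<Sum>i=1..n. X i x)/n - \<mu>\<bar>}
     \<le> (\<Sum>m. ennreal (2 * exp (- 2 * real (m+N) * (\<gamma>/4)\<^sup>2 / (K - - K)\<^sup>2))) + ennreal (4*e/\<gamma>)"
    by (rule order_trans[OF order_trans[OF a1 a2] add_mono[OF order_trans[OF b1 b2] c]])
  then show ?thesis unfolding \<mu>_def by (simp only: add.commute)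
qed


lemma UL:
  fixes \<Omega> :: "'a set" and \<F> :: "'a set set"
    and X :: "nat \<Rightarrow> 'a \<Rightarrow> real" and \<P> :: "'a measure set" and \<gamma> \<epsilon> :: real
  assumes probs: "\<And>P. P \<in> \<P> \<Longrightarrow> prob_space P \<and> space P = \<Omega> \<and> sets P = \<F>"
    and indep: "\<And>P. P \<in> \<P> \<Longrightarrow> prob_space.indep_vars P (\<lambda>_. borel) X {1..}"
    and ident: "\<And>P t. P \<in> \<P> \<Longrightarrow> t \<ge> 1 \<Longrightarrow> distr P borel (X t) = distr P borel (X 1)"
    and integr: "\<And>P. P \<in> \<P> \<Longrightarrow> integrable P (X 1)"
    and UI: "((\<lambda>K::real. SUP P \<in> \<P>.
                 \<integral>\<^sup>+ \<omega>. ennreal (\<bar>X 1 \<omega> - (\<integral>x. X 1 x \<partial>P)\<bar>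
                   * indicator {\<omega>. \<bar>X 1 \<omega> - (\<integral>x. X 1 x \<partial>P)\<bar> > K} \<omega>) \<partial>P)
             \<longlongrightarrow> 0) at_top"
    and \<gamma>: "0 < \<gamma>" and \<epsilon>: "0 < \<epsilon>"
  shows "\<exists>N\<ge>1. \<forall>P\<in>\<P>. emeasure P {x\<in>\<Omega>. \<exists>n\<ge>N. \<gamma> < \<bar>(\<Sum>i=1..n. X i x)/n - (\<integral>x. X 1 x \<partial>P)\<bar>} \<le> ennreal \<epsilon>"
proof -
  define e where "e = min (\<gamma>/4) (\<epsilon>*\<gamma>/8)"
  have e0: "0 < e" using \<gamma> \<epsilon> by (simp add: e_def)
  define S where "S K = (SUP P \<in> \<P>. \<integral>\<^sup>+ \<omega>. ennreal (\<bar>X 1 \<omega> - (\<integral>x. X 1 x \<partial>P)\<bar>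
                   * indicator {\<omega>. \<bar>X 1 \<omega> - (\<integral>x. X 1 x \<partial>P)\<bar> > K} \<omega>) \<partial>P)" for K :: real
  have "eventually (\<lambda>K. S K < ennreal e) at_top"
    using order_tendstoD(2)[OF UI[folded S_def[abs_def]]] e0 by simp
  then have "eventually (\<lambda>K. S K < ennreal e \<and> 1 \<le> K) at_top"
    by (rule eventually_conj) (rule eventually_ge_at_top)
  then obtain K0 where K0: "\<forall>K\<ge>K0. S K < ennreal e \<and> 1 \<le> K"
    unfolding eventually_at_top_linorder by blast
  define K where "K = K0"
  have K: "S K < ennreal e" "1 \<le> K" using K0 unfolding K_def by auto
  define a where "a = 2 * (\<gamma>/4)\<^sup>2 / (K - - K)\<^sup>2"
  have a0: "0 < a" using \<gamma> K by (simp add: a_def)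
  define f where "f m = 2 * exp (- 2 * real m * (\<gamma>/4)\<^sup>2 / (K - - K)\<^sup>2)" for m :: nat
  have f_eq: "f m = 2 * exp (-a) ^ m" for m
  proof -
    have h1: "- 2 * real m * (\<gamma>/4)\<^sup>2 / (K - - K)\<^sup>2 = real m * (-a)" by (simp add: a_def)
    have h2: "exp (-a) ^ m = exp (real m * (-a))" by (rule exp_of_nat_mult[symmetric])
    show ?thesis unfolding f_def h1 h2 by (rule refl)
  qed
  have f_nn: "0 \<le> f m" for m by (simp add: f_def)
  have f_sum: "summable f"
    unfolding f_eq[abs_def] using a0 by (intro summable_mult summable_geometric) simp
  obtain N1 where N1: "\<forall>n\<ge>N1. norm (\<Sum>i. f (i + n)) < \<epsilon>/2"
    using suminf_exist_split[OF _ f_sum, of "\<epsilon>/2"] \<epsilon> by auto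
  define N where "N = max N1 1"
  have N: "1 \<le> N" "N1 \<le> N" by (auto simp: N_def)
  show ?thesis
  proof (intro exI[of _ N] conjI ballI N(1))
    fix P assume P: "P \<in> \<P>"
    interpret p: prob_space P using probs[OF P] by simp
    have spP: "space P = \<Omega>" using probs[OF P] by simp
    have UIb: "(\<integral>\<^sup>+x. ennreal (\<bar>X 1 x - p.expectation (X 1)\<bar> * indicator {x. \<bar>X 1 x - p.expectation (X 1)\<bar> > K} x) \<partial>P) \<le> ennreal e"
    proof -
      have "(\<integral>\<^sup>+x. ennreal (\<bar>X 1 x - p.expectation (X 1)\<bar> * indicator {x. \<bar>X 1 x - p.expectation (X 1)\<bar> > K} x) \<partial>P) \<le> S K"
        unfolding S_def using P by (rule SUP_upper2) simp
      then show ?thesis using K(1) by simp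
    qed
    have ee: "e \<le> \<gamma>/4" "0 \<le> e" using e0 by (auto simp: e_def)
    have main: "emeasure P {x\<in>space P. \<exists>n\<ge>N. \<gamma> < \<bar>(\<Sum>i=1..n. X i x)/n - p.expectation (X 1)\<bar>}
     \<le> ennreal (4*e/\<gamma>) + (\<Sum>m. ennreal (f (m+N)))"
      unfolding f_def
      by (rule p.perP[OF indep[OF P] ident[OF P] integr[OF P] _ \<gamma> ee(2) ee(1) UIb N(1)]) (use K in auto)
    also have "(\<Sum>m. ennreal (f (m+N))) = ennreal (\<Sum>m. f (m+N))"
      using f_nn f_sum by (intro suminf_ennreal2) (auto simp: summable_iff_shift)
    also have "ennreal (4*e/\<gamma>) + ennreal (\<Sum>m. f (m+N)) = ennreal (4*e/\<gamma> + (\<Sum>m. f (m+N)))"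
      using ee \<gamma> f_nn f_sum by (intro ennreal_plus[symmetric]) (auto intro!: suminf_nonneg simp: summable_iff_shift)
    also have "4*e/\<gamma> + (\<Sum>m. f (m+N)) \<le> \<epsilon>"
    proof -
      have "4*e/\<gamma> \<le> \<epsilon>/2"
        using \<gamma> \<epsilon> by (simp add: e_def field_simps min_def)
      moreover have "(\<Sum>m. f (m+N)) < \<epsilon>/2" using N1 N(2) by fastforce
      ultimately show ?thesis by linarith
    qed
    then have "ennreal (4*e/\<gamma> + (\<Sum>m. f (m+N))) \<le> ennreal \<epsilon>" by (rule ennreal_leI)
    finally show "emeasure P {x\<in>\<Omega>. \<exists>n\<ge>N. \<gamma> < \<bar>(\<Sum>i=1..n. X i x)/n - (\<integral>x. X 1 x \<partial>P)\<bar>} \<le> ennreal \<epsilon>"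
      unfolding spP .
  qed
qed


theorem mainTheorem8:
  fixes \<Omega> :: "'a set" and F :: "nat \<Rightarrow> 'a set set" and \<F> :: "'a set set"
    and X :: "nat \<Rightarrow> 'a \<Rightarrow> real" and \<P> :: "'a measure set"
  assumes filt: "filtered_space \<Omega> F \<F>"
    and adapted: "\<And>t. t \<ge> 1 \<Longrightarrow> X t \<in> measurable (sigma \<Omega> (F t)) borel"
    and probs: "\<And>P. P \<in> \<P> \<Longrightarrow> prob_space P \<and> space P = \<Omega> \<and> sets P = \<F>"
    and indep: "\<And>P. P \<in> \<P> \<Longrightarrow> prob_space.indep_vars P (\<lambda>_. borel) X {1..}"
    and ident: "\<And>P t. P \<in> \<P> \<Longrightarrow> t \<ge> 1 \<Longrightarrow> distr P borel (X t) = distr P borel (X 1)"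
    and integr: "\<And>P. P \<in> \<P> \<Longrightarrow> integrable P (X 1)"
    and UI: "((\<lambda>K::real. SUP P \<in> \<P>.
                 \<integral>\<^sup>+ \<omega>. ennreal (\<bar>X 1 \<omega> - (\<integral>x. X 1 x \<partial>P)\<bar>
                   * indicator {\<omega>. \<bar>X 1 \<omega> - (\<integral>x. X 1 x \<partial>P)\<bar> > K} \<omega>) \<partial>P)
             \<longlongrightarrow> 0) at_top"
  shows "inv_capital \<Omega> F \<P>
           {\<omega> \<in> \<Omega>. \<not> convergent (\<lambda>t. (\<Sum>i=1..t. X i \<omega>) / real t)} = 0"
proof -
  define a where "a n \<omega> = (\<Sum>i=1..n. X i \<omega>) / real n" for n \<omega>
  have sa: "\<And>t. sigma_algebra \<Omega> (F t)" and Fmono: "\<And>t. F t \<subseteq> F (Suc t)"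
    and FF: "\<F> = sigma_sets \<Omega> (\<Union>t. F t)"
    using filt unfolding filtered_space_def by auto
  have Fmono': "F s \<subseteq> F t" if "s \<le> t" for s t
    using lift_Suc_mono_le[of F, OF Fmono that] .
  have setsF: "sets (sigma \<Omega> (F t)) = F t" for t
    using sa[of t] by (simp add: sigma_algebra.sets_measure_of_eq)
  have spaceF: "space (sigma \<Omega> (F t)) = \<Omega>" for t
    by (simp add: space_measure_of_conv)
  have Xm: "X i \<in> borel_measurable (sigma \<Omega> (F t))" if "1 \<le> i" "i \<le> t" for i t
  proof -
    have "measurable (sigma \<Omega> (F i)) borel \<subseteq> measurable (sigma \<Omega> (F t)) borel"
      by (rule measurable_mono) (auto simp: setsF spaceF Fmono' that)
    then show ?thesis using adapted[OF that(1)] by auto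
  qed
  have am: "a m \<in> borel_measurable (sigma \<Omega> (F t))" if "m \<le> t" for m t
    unfolding a_def[abs_def] using that
    by (intro borel_measurable_divide borel_measurable_sum Xm borel_measurable_const) auto
  show ?thesis
  proof (rule antisym[OF ennreal_le_epsilon zero_le])
    fix \<epsilon> :: real assume \<epsilon>: "0 < \<epsilon>"
    have ex: "\<exists>N\<ge>1. \<forall>P\<in>\<P>. emeasure P {x\<in>\<Omega>. \<exists>n\<ge>N. 1/real (k+1) < \<bar>a n x - (\<integral>x. X 1 x \<partial>P)\<bar>} \<le> ennreal (\<epsilon> / 2^(k+1))" for k :: nat
    proof -
      have g: "0 < 1/(real k+1)" by simp
      have e: "0 < \<epsilon> / 2^(k+1)" using \<epsilon> by simp
      show ?thesis unfolding a_def using UL[OF probs indep ident integr UI g e] by (simp add: ac_simps)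
    qed
    have "\<forall>k. \<exists>N. 1 \<le> N \<and> (\<forall>P\<in>\<P>. emeasure P {x\<in>\<Omega>. \<exists>n\<ge>N. 1/real (k+1) < \<bar>a n x - (\<integral>x. X 1 x \<partial>P)\<bar>} \<le> ennreal (\<epsilon> / 2^(k+1)))"
      using ex by blast
    from choice[OF this] obtain Nf where Nf0: "\<forall>k. 1 \<le> Nf k \<and> (\<forall>P\<in>\<P>. emeasure P {x\<in>\<Omega>. \<exists>n\<ge>Nf k. 1/real (k+1) < \<bar>a n x - (\<integral>x. X 1 x \<partial>P)\<bar>} \<le> ennreal (\<epsilon> / 2^(k+1)))"
      by blast
    have Nf: "\<And>k. 1 \<le> Nf k"
      "\<And>k P. P \<in> \<P> \<Longrightarrow> emeasure P {x\<in>\<Omega>. \<exists>n\<ge>Nf k. 1/real (k+1) < \<bar>a n x - (\<integral>x. X 1 x \<partial>P)\<bar>} \<le> ennreal (\<epsilon> / 2^(k+1))"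
      using Nf0 by auto
    define G where "G t \<omega> = (\<exists>k m n. Nf k \<le> m \<and> m \<le> t \<and> Nf k \<le> n \<and> n \<le> t \<and> 2/real (k+1) < \<bar>a m \<omega> - a n \<omega>\<bar>)" for t \<omega>
    have Gmono: "G s \<omega> \<Longrightarrow> s \<le> t \<Longrightarrow> G t \<omega>" for s t \<omega>
      unfolding G_def by (meson order_trans)
    define \<tau> where "\<tau> \<omega> = (if \<exists>t. G t \<omega> then enat (LEAST t. G t \<omega>) else \<infinity>)" for \<omega>
    have tau_le: "\<tau> \<omega> \<le> enat t \<longleftrightarrow> G t \<omega>" for \<omega> t
    proof
      assume "\<tau> \<omega> \<le> enat t"
      then have ex: "\<exists>t. G t \<omega>" by (auto simp: \<tau>_def split: if_splits)
      then have "(LEAST t. G t \<omega>) \<le> t" using \<open>\<tau> \<omega> \<le> enat t\<close> by (simp add: \<tau>_def)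
      moreover have "G (LEAST t. G t \<omega>) \<omega>" using ex by (rule LeastI_ex)
      ultimately show "G t \<omega>" using Gmono by blast
    next
      assume "G t \<omega>"
      then show "\<tau> \<omega> \<le> enat t" unfolding \<tau>_def by (auto intro: Least_le)
    qed
    have tau_fin: "\<tau> \<omega> < \<infinity> \<longleftrightarrow> (\<exists>t. G t \<omega>)" for \<omega>
      by (simp add: \<tau>_def)
    have stop: "stopping_time_nat \<Omega> F \<tau>"
      unfolding stopping_time_nat_def
    proof
      fix t
      have eq: "{\<omega>\<in>\<Omega>. \<tau> \<omega> \<le> enat t} = (\<Union>k. \<Union>m\<in>{..t}. \<Union>n\<in>{..t}.
          (if Nf k \<le> m \<and> Nf k \<le> n then {\<omega>\<in>space (sigma \<Omega> (F t)). 2/real (k+1) < \<bar>a m \<omega> - a n \<omega>\<bar>} else {}))"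
        unfolding tau_le G_def spaceF by auto
      have "(\<Union>k. \<Union>m\<in>{..t}. \<Union>n\<in>{..t}.
          (if Nf k \<le> m \<and> Nf k \<le> n then {\<omega>\<in>space (sigma \<Omega> (F t)). 2/real (k+1) < \<bar>a m \<omega> - a n \<omega>\<bar>} else {}))
          \<in> sets (sigma \<Omega> (F t))"
      proof -
        have mem: "(if Nf k \<le> m \<and> Nf k \<le> n then {\<omega>\<in>space (sigma \<Omega> (F t)). 2/real (k+1) < \<bar>a m \<omega> - a n \<omega>\<bar>} else {})
           \<in> sets (sigma \<Omega> (F t))" if "m \<le> t" "n \<le> t" for k m n
        proof -
          have "(\<lambda>\<omega>. \<bar>a m \<omega> - a n \<omega>\<bar>) \<in> borel_measurable (sigma \<Omega> (F t))"
            using am that by auto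
          then show ?thesis unfolding borel_measurable_iff_greater by auto
        qed
        have mem2: "(\<Union>m\<in>{..t}. \<Union>n\<in>{..t}.
          (if Nf k \<le> m \<and> Nf k \<le> n then {\<omega>\<in>space (sigma \<Omega> (F t)). 2/real (k+1) < \<bar>a m \<omega> - a n \<omega>\<bar>} else {}))
          \<in> sets (sigma \<Omega> (F t))" for k
          using mem by (intro sets.finite_UN finite_atMost) auto
        show ?thesis using mem2 by (intro sets.countable_UN) auto
      qed
      then show "{\<omega>\<in>\<Omega>. \<tau> \<omega> \<le> enat t} \<in> F t" unfolding eq setsF .
    qed
    have cover: "{\<omega> \<in> \<Omega>. \<not> convergent (\<lambda>t. (\<Sum>i=1..t. X i \<omega>) / real t)} \<subseteq> {\<omega>\<in>\<Omega>. \<tau> \<omega> < \<infinity>}"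
    proof clarify
      fix \<omega> assume \<omega>: "\<omega> \<in> \<Omega>" and nc: "\<not> convergent (\<lambda>t. (\<Sum>i=1..t. X i \<omega>) / real t)"
      have "\<not> Cauchy (\<lambda>t. a t \<omega>)"
        using nc unfolding a_def Cauchy_convergent_iff .
      then obtain d where d: "0 < d" and dd: "\<forall>M. \<exists>m\<ge>M. \<exists>n\<ge>M. d \<le> dist (a m \<omega>) (a n \<omega>)"
        unfolding Cauchy_def by (auto simp: not_less)
      obtain k :: nat where k: "2/real (k+1) < d"
      proof -
        obtain k :: nat where "2/d < k" using reals_Archimedean2 by blast
        then have "2/real (k+1) < d" using d by (simp add: field_simps)
        then show ?thesis by (rule that)
      qed
      obtain m n where mn: "Nf k \<le> m" "Nf k \<le> n" "d \<le> dist (a m \<omega>) (a n \<omega>)"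
        using dd by blast
      have "G (max m n) \<omega>"
        unfolding G_def using mn k by (intro exI[of _ k] exI[of _ m] exI[of _ n]) (auto simp: dist_real_def)
      then show "\<tau> \<omega> < \<infinity>" using tau_fin by blast
    qed
    have bound: "emeasure P {\<omega>\<in>\<Omega>. \<tau> \<omega> < \<infinity>} \<le> ennreal \<epsilon>" if P: "P \<in> \<P>" for P
    proof -
      interpret p: prob_space P using probs[OF P] by simp
      have spP: "space P = \<Omega>" using probs[OF P] by simp
      have rv: "X i \<in> borel_measurable P" if "1 \<le> i" for i
        using indep[OF P] that unfolding p.indep_vars_def by auto
      define \<mu> where "\<mu> = (\<integral>x. X 1 x \<partial>P)"
      define B where "B k = {x\<in>\<Omega>. \<exists>n\<ge>Nf k. 1/real (k+1) < \<bar>a n x - \<mu>\<bar>}" for k :: nat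
      have amP: "a n \<in> borel_measurable P" for n
        unfolding a_def[abs_def] using rv
        by (intro borel_measurable_divide borel_measurable_sum borel_measurable_const) auto
      have B_sets: "B k \<in> sets P" for k
      proof -
        have "B k = (\<Union>n. if Nf k \<le> n then {x\<in>space P. 1/real (k+1) < \<bar>a n x - \<mu>\<bar>} else {})"
          unfolding B_def spP by auto
        also have "\<dots> \<in> sets P"
        proof -
          have "{x\<in>space P. 1/real (k+1) < \<bar>a n x - \<mu>\<bar>} \<in> sets P" for n
          proof -
            have "(\<lambda>x. \<bar>a n x - \<mu>\<bar>) \<in> borel_measurable P" using amP by auto
            then show ?thesis unfolding borel_measurable_iff_greater by auto
          qed
          then show ?thesis by (intro sets.countable_UN) auto
        qed
        finally show ?thesis .
      qed
      have sub: "{\<omega>\<in>\<Omega>. \<tau> \<omega> < \<infinity>} \<subseteq> (\<Union>k. B k)"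
      proof clarify
        fix \<omega> assume \<omega>: "\<omega> \<in> \<Omega>" "\<tau> \<omega> < \<infinity>"
        then obtain t where "G t \<omega>" using tau_fin by blast
        then obtain k m n where kmn: "Nf k \<le> m" "Nf k \<le> n" "2/real (k+1) < \<bar>a m \<omega> - a n \<omega>\<bar>"
          unfolding G_def by blast
        have "1/real (k+1) < \<bar>a m \<omega> - \<mu>\<bar> \<or> 1/real (k+1) < \<bar>a n \<omega> - \<mu>\<bar>"
        proof (rule ccontr)
          assume "\<not> ?thesis"
          then have h: "\<bar>a m \<omega> - \<mu>\<bar> \<le> 1/real (k+1)" "\<bar>a n \<omega> - \<mu>\<bar> \<le> 1/real (k+1)" by auto
          then have "\<bar>a m \<omega> - a n \<omega>\<bar> \<le> 1/real (k+1) + 1/real (k+1)" by arith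
          also have "1/real (k+1) + 1/real (k+1) = 2/real (k+1)" by simp
          finally have "\<bar>a m \<omega> - a n \<omega>\<bar> \<le> 2/real (k+1)" .
          then show False using kmn by simp
        qed
        then have "\<omega> \<in> B k" unfolding B_def using \<omega> kmn by auto
        then show "\<omega> \<in> (\<Union>k. B k)" by blast
      qed
      have "emeasure P {\<omega>\<in>\<Omega>. \<tau> \<omega> < \<infinity>} \<le> emeasure P (\<Union>k. B k)"
        using B_sets by (intro emeasure_mono[OF sub]) auto
      also have "\<dots> \<le> (\<Sum>k. emeasure P (B k))"
        using B_sets by (intro emeasure_subadditive_countably) auto
      also have "\<dots> \<le> (\<Sum>k. ennreal (\<epsilon> / 2^(k+1)))"
        using Nf(2)[OF P] by (intro suminf_le summableI) (simp add: B_def \<mu>_def)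
      also have "(\<Sum>k. ennreal (\<epsilon> / 2^(k+1))) = ennreal \<epsilon>"
      proof -
        have s: "(\<lambda>k. \<epsilon> / 2^(k+1)) sums \<epsilon>"
          using sums_mult[OF power_half_series, of \<epsilon>] by (simp add: field_simps)
        have "(\<Sum>k. ennreal (\<epsilon> / 2^(k+1))) = ennreal (\<Sum>k. \<epsilon> / 2^(k+1))"
          using s \<epsilon> by (intro suminf_ennreal2) (auto simp: sums_summable)
        also have "(\<Sum>k. \<epsilon> / 2^(k+1)) = \<epsilon>" using s by (rule sums_unique[symmetric])
        finally show ?thesis .
      qed
      finally show ?thesis .
    qed
    have "inv_capital \<Omega> F \<P> {\<omega> \<in> \<Omega>. \<not> convergent (\<lambda>t. (\<Sum>i=1..t. X i \<omega>) / real t)}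
        \<le> (SUP P \<in> \<P>. emeasure P {\<omega>\<in>\<Omega>. \<tau> \<omega> < \<infinity>})"
      unfolding inv_capital_def using stop cover by (intro INF_lower) auto
    also have "\<dots> \<le> ennreal \<epsilon>" using bound by (rule SUP_least)
    finally show "inv_capital \<Omega> F \<P> {\<omega> \<in> \<Omega>. \<not> convergent (\<lambda>t. (\<Sum>i=1..t. X i \<omega>) / real t)} \<le> 0 + ennreal \<epsilon>"
      by simp
  qed
qed


end
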